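(* Let $S=S(\lambda_1,\ldots,\lambda_d)$ be a spider with $n$ vertices and let $S_L$ be its line graph (which has $n-1$ vertices). If $S$ has a connected partition of type $\mu$ for every integer partition $\mu$ of $n$, then $S_L$ has a connected partition of type $\nu$ for every integer partition $\nu$ of $n-1$.
   Context: A spider $S(\lambda_1,\ldots,\lambda_d)$, for positive integers $\lambda_1,\ldots,\lambda_d$, is the tree consisting of a vertex $v$ (the center) together with $d$ vertex-disjoint paths (legs) having $\lambda_1,\ldots,\lambda_d$ vertices respectively, where $v$ is joined by an edge to one endpoint of each leg. The line graph of a graph has the edges of the graph as vertices, two being adjacent when they share an endpoint. A connected partition of a graph $G=(V,E)$ is a partition of $V$ into blocks each inducing a connected subgraph; its type is the integer partition of $|V|$ formed by the block sizes in decreasing order. *)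

theory Defs
  imports Main "HOL-Library.Multiset" "HOL-Library.Disjoint_Sets"
begin

text \<open>Simple graphs are given by a vertex set V and an edge set E of 2-element sets.\<close>

definition adj_in :: "'a set set \<Rightarrow> 'a set \<Rightarrow> ('a \<times> 'a) set" where
  "adj_in E B = {(u, v). u \<in> B \<and> v \<in> B \<and> {u, v} \<in> E}"

definition connected_on :: "'a set set \<Rightarrow> 'a set \<Rightarrow> bool" where
  "connected_on E B \<longleftrightarrow> B \<noteq> {} \<and> (\<forall>u\<in>B. \<forall>v\<in>B. (u, v) \<in> (adj_in E B)\<^sup>*)"

definition connected_partition :: "'a set \<Rightarrow> 'a set set \<Rightarrow> 'a set set \<Rightarrow> bool" where
  "connected_partition V E P \<longleftrightarrow> partition_on V P \<and> (\<forall>B\<in>P. connected_on E B)"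

definition partition_type :: "'a set set \<Rightarrow> nat multiset" where
  "partition_type P = image_mset card (mset_set P)"

definition has_cp_type :: "'a set \<Rightarrow> 'a set set \<Rightarrow> nat multiset \<Rightarrow> bool" where
  "has_cp_type V E \<mu> \<longleftrightarrow> (\<exists>P. connected_partition V E P \<and> partition_type P = \<mu>)"

definition int_partition :: "nat \<Rightarrow> nat multiset \<Rightarrow> bool" where
  "int_partition n \<mu> \<longleftrightarrow> (\<forall>x\<in>#\<mu>. 0 < x) \<and> sum_mset \<mu> = n"

definition line_edges :: "'a set set \<Rightarrow> 'a set set set" where
  "line_edges E = {{e, f} | e f. e \<in> E \<and> f \<in> E \<and> e \<noteq> f \<and> e \<inter> f \<noteq> {}}"

text \<open>Spider S(ls!0,...,ls!(d-1)): center (0,0); leg i (1 \<le> i \<le> d) has vertices (i,1),...,(i,ls!(i-1)),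
  with (i,1) adjacent to the center.\<close>
definition spider_V :: "nat list \<Rightarrow> (nat \<times> nat) set" where
  "spider_V ls = {(0, 0)} \<union> {(i, j). 1 \<le> i \<and> i \<le> length ls \<and> 1 \<le> j \<and> j \<le> ls ! (i - 1)}"

definition spider_E :: "nat list \<Rightarrow> (nat \<times> nat) set set" where
  "spider_E ls = {{(0, 0), (i, 1)} | i. 1 \<le> i \<and> i \<le> length ls}
     \<union> {{(i, j), (i, Suc j)} | i j. 1 \<le> i \<and> i \<le> length ls \<and> 1 \<le> j \<and> Suc j \<le> ls ! (i - 1)}"

end

theory Submission
  imports Defs
begin


lemma conn_transfer:
  assumes c: "connected_on E B" and BW: "B \<subseteq> W"
    and hom: "\<And>u w. u\<in>W \<Longrightarrow> w\<in>W \<Longrightarrow> {u,w}\<in>E \<Longrightarrow> {h u, h w} \<in> L"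
  shows "connected_on L (h ` B)"
proof -
  have step: "(h u, h w) \<in> (adj_in L (h ` B))\<^sup>*" if "(u, w) \<in> (adj_in E B)\<^sup>*" for u w
    using that
  proof (induction rule: rtrancl_induct)
    case base then show ?case by simp
  next
    case (step y z)
    then have "y \<in> B" "z \<in> B" "{y,z} \<in> E" by (auto simp: adj_in_def)
    then have "(h y, h z) \<in> adj_in L (h ` B)" using hom BW by (auto simp: adj_in_def)
    with step.IH show ?case by (meson rtrancl.rtrancl_into_rtrancl)
  qed
  show ?thesis using c step unfolding connected_on_def by auto
qed

lemma cp_transfer:
  assumes cp: "connected_partition W E Q" and fin: "finite W"
    and inj: "inj_on h W"
    and hom: "\<And>u w. u\<in>W \<Longrightarrow> w\<in>W \<Longrightarrow> {u,w}\<in>E \<Longrightarrow> {h u, h w} \<in> L"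
  shows "connected_partition (h ` W) L ((`) h ` Q) \<and> partition_type ((`) h ` Q) = partition_type Q"
proof -
  have po: "partition_on W Q" and cq: "\<forall>B\<in>Q. connected_on E B"
    using cp by (auto simp: connected_partition_def)
  have sub: "B \<subseteq> W" if "B \<in> Q" for B using po that by (auto simp: partition_on_def)
  have ne: "{} \<notin> Q" using po by (auto simp: partition_on_def)
  have "(`) h ` Q - {{}} = (`) h ` Q" using ne by auto
  then have po2: "partition_on (h ` W) ((`) h ` Q)"
    using partition_on_inj_image[OF po inj] by simp
  have c2: "\<forall>B'\<in>(`) h ` Q. connected_on L B'"
  proof
    fix B' assume "B' \<in> (`) h ` Q"
    then obtain B where "B \<in> Q" "B' = h ` B" by blast
    then show "connected_on L B'" using conn_transfer[of E B W h L, OF _ sub hom] cq by simp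
  qed
  have finQ: "finite Q" using finite_elements[OF fin po] .
  have injQ: "inj_on ((`) h) Q"
  proof (rule inj_onI)
    fix B B' assume "B \<in> Q" "B' \<in> Q" "h ` B = h ` B'"
    then show "B = B'" using inj_on_image_eq_iff[OF inj sub sub] by blast
  qed
  have "partition_type ((`) h ` Q) = image_mset card (image_mset ((`) h) (mset_set Q))"
    unfolding partition_type_def using image_mset_mset_set[OF injQ] by simp
  also have "\<dots> = image_mset card (mset_set Q)"
    unfolding multiset.map_comp
  proof (rule image_mset_cong)
    fix B assume "B \<in># mset_set Q"
    then have "B \<in> Q" using finQ by simp
    then show "(card \<circ> (`) h) B = card B"
      using card_image inj_on_subset inj sub by (metis comp_apply)
  qed
  finally show ?thesis using po2 c2 by (simp add: connected_partition_def partition_type_def)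
qed



lemma spider_V_iff: "(a,b) \<in> spider_V ls \<longleftrightarrow> (a=0 \<and> b=0) \<or> (1\<le>a \<and> a \<le> length ls \<and> 1 \<le> b \<and> b \<le> ls!(a-1))"
  by (auto simp: spider_V_def)

lemma finite_spider_V: "finite (spider_V ls)"
proof -
  have "spider_V ls \<subseteq> insert (0,0) (SIGMA a:{1..length ls}. {1..ls!(a-1)})"
    by (auto simp: spider_V_def)
  then show ?thesis by (rule finite_subset) auto
qed

definition fE :: "nat\<times>nat \<Rightarrow> (nat\<times>nat) set" where
  "fE p = {if snd p = 1 then (0,0) else (fst p, snd p - 1), p}"

definition sg :: "nat\<times>nat \<Rightarrow> nat\<times>nat \<Rightarrow> nat\<times>nat" where
  "sg x p = (if fst p = 0 then (fst x, 1) else if fst p = fst x \<and> snd p < snd x then (fst p, Suc (snd p)) else p)"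

lemma E_eq:
  assumes pos: "\<forall>l\<in>set ls. 0 < l"
  shows "spider_E ls = fE ` (spider_V ls - {(0,0)})"
proof
  show "spider_E ls \<subseteq> fE ` (spider_V ls - {(0,0)})"
  proof
    fix e assume "e \<in> spider_E ls"
    then consider (c) i where "1 \<le> i" "i \<le> length ls" "e = {(0,0),(i,1)}"
      | (l) i j where "1 \<le> i" "i \<le> length ls" "1 \<le> j" "Suc j \<le> ls!(i-1)" "e = {(i,j),(i,Suc j)}"
      unfolding spider_E_def by blast
    then show "e \<in> fE ` (spider_V ls - {(0,0)})"
    proof cases
      case c
      then have "ls!(i-1) \<in> set ls" by auto
      with pos have "1 \<le> ls!(i-1)" by auto
      with c have "(i,1) \<in> spider_V ls - {(0,0)}" by (auto simp: spider_V_iff)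
      moreover have "e = fE (i,1)" using c by (auto simp: fE_def)
      ultimately show ?thesis by blast
    next
      case l
      then have "(i,Suc j) \<in> spider_V ls - {(0,0)}" by (auto simp: spider_V_iff)
      moreover have "e = fE (i,Suc j)" using l by (auto simp: fE_def)
      ultimately show ?thesis by blast
    qed
  qed
next
  show "fE ` (spider_V ls - {(0,0)}) \<subseteq> spider_E ls"
  proof
    fix e assume "e \<in> fE ` (spider_V ls - {(0,0)})"
    then obtain p where p: "p \<in> spider_V ls" "p \<noteq> (0,0)" "e = fE p" by blast
    obtain a b where "p = (a,b)" by fastforce
    with p have ab: "(a,b) \<in> spider_V ls" "(a,b) \<noteq> (0,0)" "e = fE (a,b)" by auto
    then have r: "1\<le>a" "a \<le> length ls" "1 \<le> b" "b \<le> ls!(a-1)" by (auto simp: spider_V_iff)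
    show "e \<in> spider_E ls"
    proof (cases "b = 1")
      case True
      then have "e = {(0,0),(a,1)}" using ab by (simp add: fE_def)
      moreover have "{(0,0),(a,1)} \<in> {{(0::nat, 0::nat), (i, 1)} | i. 1 \<le> i \<and> i \<le> length ls}" using r by blast
      ultimately show ?thesis unfolding spider_E_def by simp
    next
      case False
      then have "e = {(a,b-1),(a,Suc (b-1))}" using ab r by (simp add: fE_def)
      moreover have "1 \<le> b-1" "Suc (b-1) \<le> ls!(a-1)" using r False by auto
      moreover have "{(a,b-1),(a,Suc (b-1))} \<in> {{(i, j), (i, Suc j)} | i j. 1 \<le> i \<and> i \<le> length ls \<and> 1 \<le> j \<and> Suc j \<le> ls ! (i - 1)}"
        using r calculation(2,3) by blast
      ultimately show ?thesis unfolding spider_E_def by simp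
    qed
  qed
qed

lemma fE_inj: "inj_on fE (spider_V ls - {(0,0)})"
proof (rule inj_onI)
  fix p q assume p: "p \<in> spider_V ls - {(0,0)}" and q: "q \<in> spider_V ls - {(0,0)}" and e: "fE p = fE q"
  obtain a b where [simp]: "p = (a,b)" by fastforce
  obtain c d where [simp]: "q = (c,d)" by fastforce
  have "1 \<le> a" "1 \<le> b" "1 \<le> c" "1 \<le> d" using p q by (auto simp: spider_V_iff)
  have s1: "(a,b) \<in> fE (a,b)" "(c,d) \<in> fE (c,d)" by (simp_all add: fE_def)
  have m1: "(a,b) \<in> fE (c,d)" using e s1 by simp
  have m2: "(c,d) \<in> fE (a,b)" using e s1 by simp
  show "p = q"
  proof (rule ccontr)
    assume ne: "p \<noteq> q"
    have h1: "(a,b) = (if d = 1 then (0,0) else (c, d-1))"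
      using m1 ne unfolding fE_def by auto
    have h2: "(c,d) = (if b = 1 then (0,0) else (a, b-1))"
      using m2 ne unfolding fE_def by auto
    show False
    proof (cases "d = 1")
      case True then show False using h1 \<open>1 \<le> a\<close> by simp
    next
      case False
      with h1 have "b = d - 1" by simp
      show False
      proof (cases "b = 1")
        case True then show False using h2 \<open>1 \<le> c\<close> by simp
      next
        case False
        with h2 have "d = b - 1" by simp
        with \<open>b = d - 1\<close> \<open>1 \<le> b\<close> show False by simp
      qed
    qed
  qed
qed

lemma sg_cases:
  assumes "p \<in> spider_V ls" "p \<noteq> (i,j)" "1 \<le> i" "1 \<le> j"
  shows "(p = (0,0) \<and> sg (i,j) p = (i,1))
       \<or> (\<exists>b. p = (i,b) \<and> 1 \<le> b \<and> b < j \<and> sg (i,j) p = (i, Suc b))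
       \<or> (sg (i,j) p = p \<and> 1 \<le> fst p \<and> 1 \<le> snd p \<and> (fst p \<noteq> i \<or> j < snd p))"
proof -
  obtain a b where p: "p = (a,b)" by fastforce
  show ?thesis
  proof (cases "a = 0")
    case True
    then have "p = (0,0)" using assms p by (simp add: spider_V_iff)
    then show ?thesis by (simp add: sg_def)
  next
    case False
    then have ab: "1 \<le> a" "1 \<le> b" using assms p by (auto simp: spider_V_iff)
    show ?thesis
    proof (cases "a = i \<and> b < j")
      case True then show ?thesis using ab p by (simp add: sg_def)
    next
      case F2: False
      then have "a \<noteq> i \<or> j < b" using assms p by auto
      then show ?thesis using ab p False F2 by (simp add: sg_def)
    qed
  qed
qed

lemma sg_bij:
  assumes x: "x \<in> spider_V ls"
  shows "bij_betw (sg x) (spider_V ls - {x}) (spider_V ls - {(0,0)})"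
proof -
  obtain i j where xij: "x = (i,j)" by fastforce
  show ?thesis
  proof (cases "x = (0,0)")
    case True
    have fix0: "sg x p = id p" if "p \<in> spider_V ls - {x}" for p
    proof -
      obtain a b where p: "p = (a,b)" by fastforce
      have "a \<noteq> 0" using that p True by (auto simp: spider_V_iff)
      then show ?thesis using True p by (simp add: sg_def)
    qed
    have "bij_betw id (spider_V ls - {x}) (spider_V ls - {(0,0)})" using True by (simp add: bij_betw_id)
    then show ?thesis using bij_betw_cong[of "spider_V ls - {x}" "sg x" id] fix0 by blast
  next
    case False
    then have r: "1\<le>i" "i \<le> length ls" "1 \<le> j" "j \<le> ls!(i-1)" using x xij by (auto simp: spider_V_iff)
    have cs: "(p = (0,0) \<and> sg (i,j) p = (i,1))
       \<or> (\<exists>b. p = (i,b) \<and> 1 \<le> b \<and> b < j \<and> sg (i,j) p = (i, Suc b))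
       \<or> (sg (i,j) p = p \<and> 1 \<le> fst p \<and> 1 \<le> snd p \<and> (fst p \<noteq> i \<or> j < snd p))"
      if "p \<in> spider_V ls - {x}" for p
      using sg_cases[of p ls i j] that r xij by simp
    show ?thesis unfolding bij_betw_def
    proof (intro conjI)
      show "inj_on (sg x) (spider_V ls - {x})"
      proof (rule inj_onI)
        fix p q assume p: "p \<in> spider_V ls - {x}" and q: "q \<in> spider_V ls - {x}" and e: "sg x p = sg x q"
        show "p = q" using cs[OF p] cs[OF q] e xij r by auto
      qed
      show "sg x ` (spider_V ls - {x}) = spider_V ls - {(0,0)}"
      proof
        show "sg x ` (spider_V ls - {x}) \<subseteq> spider_V ls - {(0,0)}"
        proof
          fix y assume "y \<in> sg x ` (spider_V ls - {x})"
          then obtain p where p: "p \<in> spider_V ls - {x}" "y = sg x p" by blast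
          from cs[OF p(1)] show "y \<in> spider_V ls - {(0,0)}"
          proof (elim disjE exE conjE)
            assume "sg (i, j) p = (i, 1)" then show ?thesis using p xij r by (simp add: spider_V_iff)
          next
            fix b assume "sg (i, j) p = (i, Suc b)" "b < j" then show ?thesis using p xij r by (simp add: spider_V_iff)
          next
            assume "sg (i, j) p = p" "1 \<le> fst p" then show ?thesis using p xij by auto
          next
            assume "sg (i, j) p = p" "1 \<le> fst p" then show ?thesis using p xij by auto
          qed
        qed
        show "spider_V ls - {(0,0)} \<subseteq> sg x ` (spider_V ls - {x})"
        proof
          fix y assume y: "y \<in> spider_V ls - {(0,0)}"
          obtain a b where yab: "y = (a,b)" by fastforce
          have ab: "1\<le>a" "a \<le> length ls" "1 \<le> b" "b \<le> ls!(a-1)" using y yab by (auto simp: spider_V_iff)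
          show "y \<in> sg x ` (spider_V ls - {x})"
          proof (cases "a = i \<and> b \<le> j")
            case True
            show ?thesis
            proof (cases "b = 1")
              case True
              have "(0,0) \<in> spider_V ls - {x}" using False by (simp add: spider_V_iff)
              moreover have "y = sg x (0,0)" using yab \<open>a = i \<and> b \<le> j\<close> True xij by (simp add: sg_def)
              ultimately show ?thesis by blast
            next
              case False
              have "1 \<le> b-1" "b - 1 \<le> ls!(a-1)" using ab False by linarith+
              then have "(a,b-1) \<in> spider_V ls" using ab by (simp add: spider_V_iff)
              moreover have "(a,b-1) \<noteq> x" using xij \<open>a = i \<and> b \<le> j\<close> ab by auto
              moreover have "y = sg x (a, b-1)" using yab \<open>a = i \<and> b \<le> j\<close> False ab xij by (auto simp: sg_def)
              ultimately show ?thesis by blast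
            qed
          next
            case False
            have "(a,b) \<noteq> x" using xij False by auto
            moreover have "y = sg x (a, b)" using yab xij False ab by (auto simp: sg_def)
            moreover have "(a,b) \<in> spider_V ls" using y yab by simp
            ultimately show ?thesis by (metis DiffI singletonD rev_image_eqI)
          qed
        qed
      qed
    qed
  qed
qed



lemma hom_center:
  assumes x: "x \<in> spider_V ls" and "(0,0) \<noteq> x" and a: "(a,1) \<noteq> x" "1 \<le> a"
  shows "fE (sg x (0,0)) \<inter> fE (sg x (a,1)) \<noteq> {}"
proof -
  obtain i j where xij: "x = (i,j)" by fastforce
  have r: "1\<le>i" "1 \<le> j" using x xij assms(2) by (auto simp: spider_V_iff)
  have s0: "sg x (0,0) = (i,1)" using xij by (simp add: sg_def)
  show ?thesis
  proof (cases "a = i")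
    case True
    then have "1 < j" using a xij r by auto
    then have "sg x (a,1) = (i,2)" using xij True r by (simp add: sg_def)
    then have "(i,1) \<in> fE (sg x (0,0)) \<inter> fE (sg x (a,1))" using s0 by (simp add: fE_def)
    then show ?thesis by blast
  next
    case False
    then have "sg x (a,1) = (a,1)" using xij a by (simp add: sg_def)
    then have "(0,0) \<in> fE (sg x (0,0)) \<inter> fE (sg x (a,1))" using s0 by (simp add: fE_def)
    then show ?thesis by blast
  qed
qed

lemma hom_leg:
  assumes w: "(a, Suc b) \<noteq> x" and ab: "1 \<le> a" "1 \<le> b"
  shows "fE (sg x (a,b)) \<inter> fE (sg x (a,Suc b)) \<noteq> {}"
proof -
  obtain i j where xij: "x = (i,j)" by fastforce
  show ?thesis
  proof (cases "a = i \<and> b < j")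
    case True
    then have "Suc b < j" using w xij by auto
    then have "sg x (a,b) = (a, Suc b)" "sg x (a, Suc b) = (a, Suc (Suc b))"
      using True xij ab by (simp_all add: sg_def)
    then have "(a,Suc b) \<in> fE (sg x (a,b)) \<inter> fE (sg x (a,Suc b))" by (simp add: fE_def)
    then show ?thesis by blast
  next
    case False
    then have "sg x (a,b) = (a, b)" "sg x (a, Suc b) = (a, Suc b)"
      using xij ab by (auto simp: sg_def)
    then have "(a,b) \<in> fE (sg x (a,b)) \<inter> fE (sg x (a,Suc b))" using ab by (simp add: fE_def)
    then show ?thesis by blast
  qed
qed

lemma no_loop: "{u,u} \<notin> spider_E ls"
proof
  assume e: "{u,u} \<in> spider_E ls"
  from e consider (c) a where "1 \<le> a" "{u,u} = {(0,0),(a,1)}"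
      | (l) a b where "{u,u} = {(a,b),(a,Suc b)}"
    unfolding spider_E_def by blast
  then show False
  proof cases
    case c
    then have "(0,0) \<in> {u}" "(a,1) \<in> {u}" by auto
    then have "(0::nat,0::nat) = (a,1)" by simp
    then show False by simp
  next
    case l
    then have "(a,b) \<in> {u}" "(a,Suc b) \<in> {u}" by auto
    then have "(a,b) = (a,Suc b)" by simp
    then show False by simp
  qed
qed

lemma hom_meet:
  assumes x: "x \<in> spider_V ls" and u: "u \<in> spider_V ls - {x}" and w: "w \<in> spider_V ls - {x}"
    and e: "{u,w} \<in> spider_E ls"
  shows "fE (sg x u) \<inter> fE (sg x w) \<noteq> {}"
proof -
  have sym: "fE (sg x w) \<inter> fE (sg x u) \<noteq> {} \<Longrightarrow> ?thesis" by (simp add: Int_commute)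
  from e[unfolded spider_E_def Un_iff mem_Collect_eq] show ?thesis
  proof (elim disjE exE conjE)
    fix a assume eq: "{u,w} = {(0,0),(a,1)}" and a: "1 \<le> a" "a \<le> length ls"
    then have "(u = (0,0) \<and> w = (a,1)) \<or> (u = (a,1) \<and> w = (0,0))" by (simp add: doubleton_eq_iff)
    then show ?thesis
    proof
      assume h: "u = (0,0) \<and> w = (a,1)"
      then have "(0,0) \<noteq> x" "(a,1) \<noteq> x" using u w by auto
      then show ?thesis using hom_center[OF x _ _ a(1)] h by simp
    next
      assume h: "u = (a,1) \<and> w = (0,0)"
      then have "(0,0) \<noteq> x" "(a,1) \<noteq> x" using u w by auto
      then show ?thesis using hom_center[OF x _ _ a(1)] h sym by simp
    qed
  next
    fix a b assume eq: "{u,w} = {(a,b),(a,Suc b)}" and l0: "1 \<le> a" "a \<le> length ls" "1 \<le> b" "Suc b \<le> ls!(a-1)"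
    have l: "1 \<le> a" "1 \<le> b" using l0 by auto
    from eq have "(u = (a,b) \<and> w = (a,Suc b)) \<or> (u = (a,Suc b) \<and> w = (a,b))" by (simp add: doubleton_eq_iff)
    then show ?thesis
    proof
      assume h: "u = (a,b) \<and> w = (a,Suc b)"
      then have "(a,Suc b) \<noteq> x" using w by auto
      then show ?thesis using hom_leg[OF _ l] h by simp
    next
      assume h: "u = (a,Suc b) \<and> w = (a,b)"
      then have "(a,Suc b) \<noteq> x" using u by auto
      then show ?thesis using hom_leg[OF _ l] h sym by simp
    qed
  qed
qed



theorem proposition6p2:
  fixes ls :: "nat list" and n :: nat
  assumes "\<forall>l\<in>set ls. 0 < l"
    and "n = card (spider_V ls)"
    and "\<forall>\<mu>. int_partition n \<mu> \<longrightarrow> has_cp_type (spider_V ls) (spider_E ls) \<mu>"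
  shows "\<forall>\<nu>. int_partition (n - 1) \<nu> \<longrightarrow> has_cp_type (spider_E ls) (line_edges (spider_E ls)) \<nu>"
proof (intro allI impI)
  fix \<nu> assume nu: "int_partition (n - 1) \<nu>"
  define V where "V = spider_V ls"
  define E where "E = spider_E ls"
  have finV: "finite V" unfolding V_def by (rule finite_spider_V)
  have "(0,0) \<in> V" unfolding V_def by (simp add: spider_V_iff)
  then have "n \<ge> 1" using assms(2) finV unfolding V_def[symmetric] by (metis card_0_eq empty_iff less_one not_le)
  then have "int_partition n (\<nu> + {#1#})" using nu by (auto simp: int_partition_def)
  then obtain P where cpP: "connected_partition V E P" and tP: "partition_type P = \<nu> + {#1#}"
    using assms(3) unfolding has_cp_type_def V_def E_def by blast
  have poP: "partition_on V P" using cpP by (simp add: connected_partition_def)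
  have finP: "finite P" using finite_elements[OF finV poP] .
  have "1 \<in># partition_type P" using tP by simp
  then obtain B where B: "B \<in> P" "card B = 1"
    unfolding partition_type_def using finP by auto
  then obtain x where Bx: "B = {x}" by (meson card_1_singletonE)
  have xV: "x \<in> V" using poP B Bx by (auto simp: partition_on_def)
  define Q where "Q = P - {{x}}"
  have PQ: "P = insert {x} Q" "{x} \<notin> Q" using B Bx Q_def by auto
  have "disjnt {x} (\<Union>Q)"
  proof -
    have "x \<notin> C" if "C \<in> Q" for C
    proof
      assume "x \<in> C"
      have CP: "C \<in> P" "C \<noteq> {x}" using that Q_def by auto
      have "disjoint P" using poP by (simp add: partition_on_def)
      then have "disjnt C {x}" using CP B Bx by (metis pairwiseD)
      with \<open>x \<in> C\<close> show False by (simp add: disjnt_def)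
    qed
    then show ?thesis by (auto simp: disjnt_def)
  qed
  then have poQ: "partition_on (V - {x}) Q" using poP PQ partition_on_insert by metis
  have cpQ: "connected_partition (V - {x}) E Q"
    using poQ cpP unfolding connected_partition_def Q_def by auto
  have "partition_type Q = \<nu>"
  proof -
    have "mset_set Q = mset_set P - mset_set {{x}}"
      unfolding Q_def by (rule mset_set_Diff) (use finP B Bx in auto)
    then have "mset_set Q = mset_set P - {#{x}#}" by simp
    moreover have "{x} \<in># mset_set P" using finP B Bx by simp
    ultimately have "image_mset card (mset_set Q) = image_mset card (mset_set P) - {#card {x}#}"
      by (simp add: image_mset_Diff)
    then show ?thesis using tP unfolding partition_type_def by simp
  qed
  define h where "h = fE \<circ> sg x"
  have sgb: "bij_betw (sg x) (V - {x}) (V - {(0,0)})" unfolding V_def using sg_bij xV V_def by blast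
  have injh: "inj_on h (V - {x})"
    unfolding h_def using sgb fE_inj[of ls] unfolding V_def bij_betw_def
    by (simp add: comp_inj_on)
  have imh: "h ` (V - {x}) = E"
  proof -
    have "h ` (V - {x}) = fE ` (sg x ` (V - {x}))" unfolding h_def by (simp add: image_comp)
    also have "\<dots> = fE ` (V - {(0,0)})" using sgb by (simp add: bij_betw_def)
    finally show ?thesis unfolding E_def V_def using E_eq[OF assms(1)] by simp
  qed
  have hom: "{h u, h w} \<in> line_edges E" if u: "u \<in> V - {x}" and w: "w \<in> V - {x}" and e: "{u,w} \<in> E" for u w
  proof -
    have "u \<noteq> w" using e no_loop unfolding E_def by metis
    then have "h u \<noteq> h w" using injh u w by (meson inj_on_contraD)
    moreover have "h u \<in> E" "h w \<in> E" using imh u w by auto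
    moreover have "h u \<inter> h w \<noteq> {}" unfolding h_def using hom_meet[of x ls u w] xV u w e unfolding V_def E_def by simp
    ultimately show ?thesis unfolding line_edges_def by blast
  qed
  have "connected_partition (h ` (V - {x})) (line_edges E) ((`) h ` Q) \<and> partition_type ((`) h ` Q) = partition_type Q"
    by (rule cp_transfer[OF cpQ _ injh hom]) (use finV in auto)
  then show "has_cp_type (spider_E ls) (line_edges (spider_E ls)) \<nu>"
    unfolding has_cp_type_def using imh \<open>partition_type Q = \<nu>\<close> E_def by auto
qed

end
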